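(* Let $(\mathcal A,\varphi,\mathcal F,\Phi)$ be a ncps of type B$'$ with associated infinitesimal ncps $(\mathcal B,\varphi,\varphi')$. Let $\mathcal A_1$ be a subalgebra of $\mathcal A$ containing $1_{\mathcal A}$ and $\mathcal F_1$ a subalgebra of $\mathcal F$. Then $(\mathcal A_1,\mathcal F_1)$ is cyclic-antimonotone independent in $(\mathcal A,\varphi,\mathcal F,\Phi)$ if and only if $\mathcal A_1':=\mathcal A_1\oplus\{0_{\mathcal F}\}$ and $\mathcal F_1':=\mathbb C1_{\mathcal A}\oplus\mathcal F_1$ are infinitesimally free in $(\mathcal B,\varphi,\varphi')$.
   Context: A ncps of type B$'$ is $(\mathcal A,\varphi,\mathcal F,\Phi)$ where $\mathcal A$ is a unital complex algebra, $\varphi:\mathcal A\to\mathbb C$ linear with $\varphi(1_{\mathcal A})=1$, $\mathcal F$ a complex algebra which is an $\mathcal A$-bimodule compatible with the multiplication of $\mathcal F$, and $\Phi:\mathcal F\to\mathbb C$ linear. The associated algebra is $\mathcal B=\mathcal A\oplus\mathcal F$ with product $(a_1,f_1)(a_2,f_2)=(a_1a_2,a_1f_2+f_1a_2+f_1f_2)$ and unit $1_{\mathcal A}$; the associated infinitesimal ncps is $(\mathcal B,\varphi,\varphi')$ with $\varphi(a+f):=\varphi(a)$, $\varphi'(a+f):=\Phi(f)$. $(\mathcal A_1,\mathcal F_1)$ is cyclic-antimonotone independent if $\Phi(a_0f_1a_1f_2\cdots a_{n-1}f_na_n)=\varphi(a_0a_n)\big[\prod_{i=1}^{n-1}\varphi(a_i)\big]\Phi(f_1\cdots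 f_n)$ for all $n\in\mathbb N$, $a_l\in\mathcal A_1$, $f_l\in\mathcal F_1$. In an infinitesimal ncps $(\mathcal B,\varphi,\varphi')$ ($\varphi(1)=1$, $\varphi'(1)=0$), unital subalgebras $(\mathcal B_i)_{i\in I}$ are infinitesimally free if for every $n\ge1$, $i_1,\dots,i_n\in I$ with $i_l\ne i_{l+1}$, and $b_l\in\mathcal B_{i_l}$ with $\varphi(b_l)=0$: $\varphi(b_1\cdots b_n)=0$, and $\varphi'(b_1\cdots b_n)=\varphi(b_1b_n)\varphi(b_2b_{n-1})\cdots\varphi(b_{(n-1)/2}b_{(n+3)/2})\varphi'(b_{(n+1)/2})$ if $n$ is odd and $i_1=i_n,\ i_2=i_{n-1},\dots,i_{(n-1)/2}=i_{(n+3)/2}$, while $\varphi'(b_1\cdots b_n)=0$ otherwise. *)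

theory Defs
  imports Complex_Main
begin

definition cplx_algebra :: "(complex \<Rightarrow> 'a::ring \<Rightarrow> 'a) \<Rightarrow> bool" where
  "cplx_algebra s \<longleftrightarrow> vector_space s \<and>
     (\<forall>c x y. s c (x * y) = s c x * y \<and> s c (x * y) = x * s c y)"

definition subalg :: "(complex \<Rightarrow> 'a::ring \<Rightarrow> 'a) \<Rightarrow> 'a set \<Rightarrow> bool" where
  "subalg s S \<longleftrightarrow> 0 \<in> S \<and> (\<forall>x\<in>S. \<forall>y\<in>S. x + y \<in> S \<and> x * y \<in> S) \<and> (\<forall>c. \<forall>x\<in>S. s c x \<in> S)"

definition bimodule_compat ::
  "(complex \<Rightarrow> 'a::ring_1 \<Rightarrow> 'a) \<Rightarrow> (complex \<Rightarrow> 'f::ring \<Rightarrow> 'f) \<Rightarrow>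
   ('a \<Rightarrow> 'f \<Rightarrow> 'f) \<Rightarrow> ('f \<Rightarrow> 'a \<Rightarrow> 'f) \<Rightarrow> bool" where
  "bimodule_compat sA sF la ra \<longleftrightarrow>
     (\<forall>a b f. la (a + b) f = la a f + la b f) \<and>
     (\<forall>a f g. la a (f + g) = la a f + la a g) \<and>
     (\<forall>c a f. la (sA c a) f = sF c (la a f)) \<and>
     (\<forall>c a f. la a (sF c f) = sF c (la a f)) \<and>
     (\<forall>a b f. la (a * b) f = la a (la b f)) \<and>
     (\<forall>f. la 1 f = f) \<and>
     (\<forall>a b f. ra f (a + b) = ra f a + ra f b) \<and>
     (\<forall>a f g. ra (f + g) a = ra f a + ra g a) \<and>
     (\<forall>c a f. ra f (sA c a) = sF c (ra f a)) \<and>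
     (\<forall>c a f. ra (sF c f) a = sF c (ra f a)) \<and>
     (\<forall>a b f. ra f (a * b) = ra (ra f a) b) \<and>
     (\<forall>f. ra f 1 = f) \<and>
     (\<forall>a b f. ra (la a f) b = la a (ra f b)) \<and>
     (\<forall>a f g. la a (f * g) = la a f * g) \<and>
     (\<forall>a f g. ra (f * g) a = f * ra g a) \<and>
     (\<forall>a f g. ra f a * g = f * la a g)"

definition ncps_typeB' ::
  "(complex \<Rightarrow> 'a::ring_1 \<Rightarrow> 'a) \<Rightarrow> ('a \<Rightarrow> complex) \<Rightarrow>
   (complex \<Rightarrow> 'f::ring \<Rightarrow> 'f) \<Rightarrow> ('a \<Rightarrow> 'f \<Rightarrow> 'f) \<Rightarrow> ('f \<Rightarrow> 'a \<Rightarrow> 'f) \<Rightarrow>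
   ('f \<Rightarrow> complex) \<Rightarrow> bool" where
  "ncps_typeB' sA \<phi> sF la ra \<Phi> \<longleftrightarrow>
     cplx_algebra sA \<and> cplx_algebra sF \<and> bimodule_compat sA sF la ra \<and>
     Vector_Spaces.linear sA (*) \<phi> \<and> \<phi> 1 = 1 \<and> Vector_Spaces.linear sF (*) \<Phi>"

text \<open>Elements of B are pairs (a, f) standing for a + f.\<close>
definition Bmult :: "('a::ring_1 \<Rightarrow> 'f::ring \<Rightarrow> 'f) \<Rightarrow> ('f \<Rightarrow> 'a \<Rightarrow> 'f) \<Rightarrow>
    'a \<times> 'f \<Rightarrow> 'a \<times> 'f \<Rightarrow> 'a \<times> 'f" where
  "Bmult la ra x y = (fst x * fst y, la (fst x) (snd y) + ra (snd x) (fst y) + snd x * snd y)"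

definition Bone :: "'a::ring_1 \<times> 'f::ring" where
  "Bone = (1, 0)"

definition Bprod :: "('a::ring_1 \<Rightarrow> 'f::ring \<Rightarrow> 'f) \<Rightarrow> ('f \<Rightarrow> 'a \<Rightarrow> 'f) \<Rightarrow>
    ('a \<times> 'f) list \<Rightarrow> 'a \<times> 'f" where
  "Bprod la ra bs = foldr (Bmult la ra) bs Bone"

definition Bphi :: "('a \<Rightarrow> complex) \<Rightarrow> 'a \<times> 'f \<Rightarrow> complex" where
  "Bphi \<phi> x = \<phi> (fst x)"

definition Bphi' :: "('f \<Rightarrow> complex) \<Rightarrow> 'a \<times> 'f \<Rightarrow> complex" where
  "Bphi' \<Phi> x = \<Phi> (snd x)"

text \<open>Product f_1 ... f_n in the (possibly non-unital) algebra F, for n \<ge> 1.\<close>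
fun Fprod :: "'f::ring list \<Rightarrow> 'f" where
  "Fprod [] = 0"
| "Fprod [x] = x"
| "Fprod (x # y # xs) = x * Fprod (y # xs)"

text \<open>The element a_0 f_1 a_1 f_2 ... a_(n-1) f_n a_n, computed in B (it lies in F).\<close>
definition mixed_word :: "('a::ring_1 \<Rightarrow> 'f::ring \<Rightarrow> 'f) \<Rightarrow> ('f \<Rightarrow> 'a \<Rightarrow> 'f) \<Rightarrow>
    nat \<Rightarrow> (nat \<Rightarrow> 'a) \<Rightarrow> (nat \<Rightarrow> 'f) \<Rightarrow> 'f" where
  "mixed_word la ra n a f =
     snd (Bprod la ra ((a 0, 0) # concat (map (\<lambda>l. [(0, f l), (a l, 0)]) [1..<n+1])))"

definition cyclic_antimonotone_indep ::
  "('a::ring_1 \<Rightarrow> complex) \<Rightarrow> ('a \<Rightarrow> 'f::ring \<Rightarrow> 'f) \<Rightarrow> ('f \<Rightarrow> 'a \<Rightarrow> 'f) \<Rightarrow>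
   ('f \<Rightarrow> complex) \<Rightarrow> 'a set \<Rightarrow> 'f set \<Rightarrow> bool" where
  "cyclic_antimonotone_indep \<phi> la ra \<Phi> A1 F1 \<longleftrightarrow>
     (\<forall>n::nat. \<forall>a f. n \<ge> 1 \<longrightarrow> (\<forall>l\<le>n. a l \<in> A1) \<longrightarrow> (\<forall>l\<in>{1..n}. f l \<in> F1) \<longrightarrow>
        \<Phi> (mixed_word la ra n a f) =
          \<phi> (a 0 * a n) * (\<Prod>i\<in>{1..n-1}. \<phi> (a i)) * \<Phi> (Fprod (map f [1..<n+1])))"

definition inf_free ::
  "('b list \<Rightarrow> 'b) \<Rightarrow> ('b \<Rightarrow> complex) \<Rightarrow> ('b \<Rightarrow> complex) \<Rightarrow> 'i set \<Rightarrow> ('i \<Rightarrow> 'b set) \<Rightarrow> bool" where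
  "inf_free bprod ph ph' I Bs \<longleftrightarrow>
     (\<forall>n::nat. \<forall>(idx::nat \<Rightarrow> 'i) (b::nat \<Rightarrow> 'b).
        n \<ge> 1 \<longrightarrow> (\<forall>l\<in>{1..n}. idx l \<in> I) \<longrightarrow>
        (\<forall>l\<in>{1..<n}. idx l \<noteq> idx (l + 1)) \<longrightarrow>
        (\<forall>l\<in>{1..n}. b l \<in> Bs (idx l) \<and> ph (b l) = 0) \<longrightarrow>
          ph (bprod (map b [1..<n+1])) = 0 \<and>
          ph' (bprod (map b [1..<n+1])) =
            (if odd n \<and> (\<forall>l\<in>{1..(n-1) div 2}. idx l = idx (n + 1 - l))
             then (\<Prod>l\<in>{1..(n-1) div 2}. ph (bprod [b l, b (n + 1 - l)])) * ph' (b ((n+1) div 2))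
             else 0))"

end

theory Submission
  imports Defs
begin


definition hh :: "'f \<times> 'a \<Rightarrow> ('a::ring_1 \<times> 'f::ring) list" where
  "hh p = [(0, fst p), (snd p, 0)]"

definition mlist :: "'a::ring_1 \<Rightarrow> ('f::ring \<times> 'a) list \<Rightarrow> ('a \<times> 'f) list" where
  "mlist a0 ps = (a0, 0) # concat (map hh ps)"

definition body :: "('f::ring \<times> 'a::ring_1) list \<Rightarrow> ('a \<times> 'f) list" where
  "body ps = concat (map hh (butlast ps)) @ [(0, fst (last ps))]"

definition Wst :: "bool \<Rightarrow> bool \<Rightarrow> 'a::ring_1 \<Rightarrow> ('f::ring \<times> 'a) list \<Rightarrow> ('a \<times> 'f) list" where
  "Wst s t a0 ps = (if s then [(a0, 0)] else []) @ body ps @ (if t then [(snd (last ps), 0)] else [])"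

lemma Fprod_Cons: "xs \<noteq> [] \<Longrightarrow> Fprod (x # xs) = x * Fprod xs"
  by (cases xs) auto

lemma Fprod_merge: "Fprod (xs @ f # g # ys) = Fprod (xs @ (f * g) # ys)"
proof (induction xs)
  case Nil
  then show ?case by (cases ys) (auto simp: mult.assoc)
next
  case (Cons x xs)
  then show ?case by (simp add: Fprod_Cons)
qed

locale B'setting =
  fixes sA :: "complex \<Rightarrow> 'a::ring_1 \<Rightarrow> 'a"
    and \<phi> :: "'a \<Rightarrow> complex"
    and sF :: "complex \<Rightarrow> 'f::ring \<Rightarrow> 'f"
    and la :: "'a \<Rightarrow> 'f \<Rightarrow> 'f"
    and ra :: "'f \<Rightarrow> 'a \<Rightarrow> 'f"
    and \<Phi> :: "'f \<Rightarrow> complex"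
    and A1 :: "'a set" and F1 :: "'f set"
  assumes ncps: "ncps_typeB' sA \<phi> sF la ra \<Phi>"
    and sA1: "subalg sA A1" and oneA1: "1 \<in> A1"
    and sF1: "subalg sF F1"
begin

lemma bm: "bimodule_compat sA sF la ra" using ncps by (simp add: ncps_typeB'_def)
lemma la_add1: "la (a + b) f = la a f + la b f" using bm by (simp add: bimodule_compat_def)
lemma la_add2: "la a (f + g) = la a f + la a g" using bm by (simp add: bimodule_compat_def)
lemma la_sc1: "la (sA c a) f = sF c (la a f)" using bm by (simp add: bimodule_compat_def)
lemma la_sc2: "la a (sF c f) = sF c (la a f)" using bm by (simp add: bimodule_compat_def)
lemma la_mult: "la (a * b) f = la a (la b f)" using bm by (simp add: bimodule_compat_def)
lemma la_one[simp]: "la 1 f = f" using bm by (simp add: bimodule_compat_def)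
lemma ra_add1: "ra f (a + b) = ra f a + ra f b" using bm by (simp add: bimodule_compat_def)
lemma ra_add2: "ra (f + g) a = ra f a + ra g a" using bm by (simp add: bimodule_compat_def)
lemma ra_sc1: "ra f (sA c a) = sF c (ra f a)" using bm by (simp add: bimodule_compat_def)
lemma ra_sc2: "ra (sF c f) a = sF c (ra f a)" using bm by (simp add: bimodule_compat_def)
lemma ra_mult: "ra f (a * b) = ra (ra f a) b" using bm by (simp add: bimodule_compat_def)
lemma ra_one[simp]: "ra f 1 = f" using bm by (simp add: bimodule_compat_def)
lemma lara: "ra (la a f) b = la a (ra f b)" using bm by (simp add: bimodule_compat_def)
lemma la_m: "la a (f * g) = la a f * g" using bm by (simp add: bimodule_compat_def)
lemma ra_m: "ra (f * g) a = f * ra g a" using bm by (simp add: bimodule_compat_def)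
lemma ra_la: "ra f a * g = f * la a g" using bm by (simp add: bimodule_compat_def)

lemma la_0a[simp]: "la 0 f = 0" using la_add1[of 0 0 f] by simp
lemma la_0f[simp]: "la a 0 = 0" using la_add2[of a 0 0] by simp
lemma ra_0a[simp]: "ra f 0 = 0" using ra_add1[of f 0 0] by simp
lemma ra_0f[simp]: "ra 0 a = 0" using ra_add2[of 0 0 a] by simp

lemma mA: "module sA" using ncps by (simp add: ncps_typeB'_def cplx_algebra_def module_iff_vector_space)
lemma mF: "module sF" using ncps by (simp add: ncps_typeB'_def cplx_algebra_def module_iff_vector_space)
lemma sA_m1: "sA c (x * y) = sA c x * y" "sA c (x * y) = x * sA c y"
  using ncps unfolding ncps_typeB'_def cplx_algebra_def by blast+
lemma sF_add: "sF c (x + y) = sF c x + sF c y" using module.scale_right_distrib[OF mF] .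
lemma sF_m1: "sF c (x * y) = sF c x * y" "sF c (x * y) = x * sF c y"
  using ncps unfolding ncps_typeB'_def cplx_algebra_def by blast+
lemma sA_0[simp]: "sA 0 x = 0" using module.scale_zero_left[OF mA] .
lemma sA_1[simp]: "sA 1 x = x" using module.scale_one[OF mA] .
lemma sA_add: "sA c (x + y) = sA c x + sA c y" using module.scale_right_distrib[OF mA] .
lemma sA_minus: "sA (-1) x = - x" using module.scale_minus_left[OF mA, of 1] by simp

lemma linphi: "\<phi> (sA c x + y) = c * \<phi> x + \<phi> y"
  using ncps by (simp add: ncps_typeB'_def Vector_Spaces.linear_iff)
lemma linPhi: "\<Phi> (sF c x + y) = c * \<Phi> x + \<Phi> y"
  using ncps by (simp add: ncps_typeB'_def Vector_Spaces.linear_iff)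
lemma phi_one[simp]: "\<phi> 1 = 1" using ncps by (simp add: ncps_typeB'_def)
lemma phi_add: "\<phi> (x + y) = \<phi> x + \<phi> y" using linphi[of 1 x y] by simp
lemma phi_0[simp]: "\<phi> 0 = 0" using phi_add[of 0 0] by simp
lemma phi_sc: "\<phi> (sA c x) = c * \<phi> x" using linphi[of c x 0] by simp
lemma Phi_add: "\<Phi> (x + y) = \<Phi> x + \<Phi> y" using linPhi[of 1 x y] module.scale_one[OF mF] by simp
lemma Phi_0[simp]: "\<Phi> 0 = 0" using Phi_add[of 0 0] by simp
lemma Phi_sc: "\<Phi> (sF c x) = c * \<Phi> x" using linPhi[of c x 0] by simp

lemma A1_add: "x \<in> A1 \<Longrightarrow> y \<in> A1 \<Longrightarrow> x + y \<in> A1" using sA1 by (simp add: subalg_def)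
lemma A1_sc: "x \<in> A1 \<Longrightarrow> sA c x \<in> A1" using sA1 by (simp add: subalg_def)
lemma F1_mult: "x \<in> F1 \<Longrightarrow> y \<in> F1 \<Longrightarrow> x * y \<in> F1" using sF1 by (simp add: subalg_def)

definition cen :: "'a \<Rightarrow> 'a" where "cen a = a - sA (\<phi> a) 1"
lemma cen_decomp: "a = sA (\<phi> a) 1 + cen a" by (simp add: cen_def)
lemma cen_phi: "\<phi> (cen a) = 0"
proof -
  have "cen a = sA (-1) (sA (\<phi> a) 1) + a" by (simp add: cen_def sA_minus)
  then show ?thesis by (simp add: linphi phi_sc)
qed
lemma cen_A1: "a \<in> A1 \<Longrightarrow> cen a \<in> A1"
proof -
  assume "a \<in> A1"
  have "cen a = sA (-1) (sA (\<phi> a) 1) + a" by (simp add: cen_def sA_minus)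
  then show ?thesis using \<open>a \<in> A1\<close> oneA1 A1_add A1_sc by simp
qed

abbreviation BM (infixl "\<cdot>" 70) where "x \<cdot> y \<equiv> Bmult la ra x y"
abbreviation P where "P xs \<equiv> Bprod la ra xs"

lemma Bassoc: "(x \<cdot> y) \<cdot> z = x \<cdot> (y \<cdot> z)"
  by (simp add: Bmult_def la_add2 ra_add2 distrib_left distrib_right la_mult ra_mult lara la_m ra_m ra_la
      mult.assoc add_ac)

lemma Bone_l[simp]: "Bone \<cdot> x = x" by (simp add: Bmult_def Bone_def)
lemma Bone_r[simp]: "x \<cdot> Bone = x" by (simp add: Bmult_def Bone_def)
lemma P_Nil[simp]: "P [] = Bone" by (simp add: Bprod_def)
lemma P_Cons[simp]: "P (x # xs) = x \<cdot> P xs" by (simp add: Bprod_def)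
lemma P_app: "P (xs @ ys) = P xs \<cdot> P ys"
  by (induction xs) (auto simp: Bassoc)

lemma lin_mid: "snd (X \<cdot> ((sA k 1 + c, 0) \<cdot> Y)) = sF k (snd (X \<cdot> Y)) + snd (X \<cdot> ((c,0) \<cdot> Y))"
proof -
  obtain x1 x2 where X: "X = (x1, x2)" by (cases X)
  obtain y1 y2 where Y: "Y = (y1, y2)" by (cases Y)
  have e1: "(sA k 1 + c, 0) \<cdot> Y = (sA k y1 + c * y1, sF k y2 + la c y2)"
    unfolding Y Bmult_def by (simp add: distrib_right la_add1 la_sc1 sA_m1(1)[symmetric])
  have e2: "(c, 0) \<cdot> Y = (c * y1, la c y2)" unfolding Y Bmult_def by simp
  have a1: "la x1 (sF k y2 + la c y2) = sF k (la x1 y2) + la x1 (la c y2)" by (simp add: la_add2 la_sc2)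
  have a2: "ra x2 (sA k y1 + c * y1) = sF k (ra x2 y1) + ra x2 (c * y1)" by (simp add: ra_add1 ra_sc1)
  have a3: "x2 * (sF k y2 + la c y2) = sF k (x2 * y2) + x2 * la c y2" by (simp add: distrib_left sF_m1(2))
  have a4: "sF k (la x1 y2 + ra x2 y1 + x2 * y2) = sF k (la x1 y2) + sF k (ra x2 y1) + sF k (x2 * y2)"
    by (simp add: sF_add)
  show ?thesis unfolding e1 e2 unfolding X Y Bmult_def snd_conv fst_conv a1 a2 a3 a4
    by (simp add: add_ac)
qed

lemma merge3: "(0,f) \<cdot> ((1,0) \<cdot> ((0,g) \<cdot> Z)) = (0, f*g) \<cdot> Z"
proof -
  have "(0,f) \<cdot> ((1,0) \<cdot> ((0,g) \<cdot> Z)) = (((0,f) \<cdot> (1,0)) \<cdot> (0,g)) \<cdot> Z" by (simp add: Bassoc)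
  also have "((0,f) \<cdot> (1,0)) \<cdot> (0,g) = (0, f*g)" by (simp add: Bmult_def)
  finally show ?thesis .
qed

lemma fst_BM[simp]: "fst (x \<cdot> y) = fst x * fst y" by (simp add: Bmult_def)

definition V :: "('a \<times> 'f) list \<Rightarrow> complex" where
  "V W = (if length W = 1 then \<Phi> (snd (W!0)) else if length W = 3 then
     \<phi> (fst (W!0) * fst (W!2)) * \<Phi> (snd (W!1)) else 0)"

lemma rhs:
  assumes ty: "\<forall>k<length W. if even k = s then snd (W!k) = 0 else fst (W!k) = 0"
  and ne: "W \<noteq> []"
  and idx: "\<forall>p\<in>{1..length W}. idx p = (even (p-1) = s)"
  and b: "\<forall>p\<in>{1..length W}. b p = W!(p-1)"
  shows "(if odd (length W) \<and> (\<forall>l\<in>{1..(length W - 1) div 2}. idx l = idx (length W + 1 - l))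
     then (\<Prod>l\<in>{1..(length W - 1) div 2}. Bphi \<phi> (Bprod la ra [b l, b (length W + 1 - l)])) *
        Bphi' \<Phi> (b ((length W + 1) div 2)) else 0) = V W"
proof -
  define N where "N = length W"
  have N1: "N \<ge> 1" using ne N_def by (cases W) auto
  have bk: "b p = W!(p-1)" if "1 \<le> p" "p \<le> N" for p
  proof -
    have "p \<in> {1..length W}" using that by (simp add: N_def)
    then show ?thesis using b by blast
  qed
  have idk: "idx p = (even (p-1) = s)" if "1 \<le> p" "p \<le> N" for p
  proof -
    have "p \<in> {1..length W}" using that by (simp add: N_def)
    then show ?thesis using idx by blast
  qed
  have tyk: "(if even k = s then snd (W!k) = 0 else fst (W!k) = 0)" if "k < N" for k
  proof -
    have "k < length W" using that by (simp add: N_def)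
    then show ?thesis using ty by blast
  qed
  have pr2: "Bphi \<phi> (Bprod la ra [x, y]) = \<phi> (fst x * fst y)" for x y
    by (simp add: Bphi_def Bprod_def Bone_def)
  have pal: "\<forall>l\<in>{1..(N - 1) div 2}. idx l = idx (N + 1 - l)" if oN: "odd N"
  proof
    fix l assume l: "l \<in> {1..(N - 1) div 2}"
    have l1: "1 \<le> l" "l \<le> (N - 1) div 2" using l by auto
    obtain m where m: "N = 2 * m + 1" using oN by (rule oddE)
    then have "(N - 1) div 2 = m" by simp
    then have "l \<le> m" using l1 by simp
    then have "N - l = 2 * (m - l) + (l - 1) + 2" using m l1 by linarith
    then have "even (N - l) = even (l - 1)" by simp
    moreover have "l \<le> N" using \<open>l \<le> m\<close> m by linarith
    moreover have "idx l = (even (l-1) = s)" by (rule idk) (use l1 \<open>l \<le> N\<close> in auto)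
    moreover have "idx (N + 1 - l) = (even (N + 1 - l - 1) = s)" by (rule idk) (use l1 \<open>l \<le> N\<close> in auto)
    moreover have "N + 1 - l - 1 = N - l" by simp
    ultimately show "idx l = idx (N + 1 - l)" by metis
  qed
  have goal: "(if odd N \<and> (\<forall>l\<in>{1..(N - 1) div 2}. idx l = idx (N + 1 - l))
     then (\<Prod>l\<in>{1..(N - 1) div 2}. Bphi \<phi> (Bprod la ra [b l, b (N + 1 - l)])) *
        Bphi' \<Phi> (b ((N + 1) div 2)) else 0) = V W"
  proof (cases "even N")
    case True
    then have "length W \<noteq> 1" "length W \<noteq> 3" using N_def by auto
    then show ?thesis using True by (simp add: V_def)
  next
    case False
    then have odd: "odd N" by simp
    show ?thesis
    proof (cases "N = 1")
      case True
      then show ?thesis using bk[of 1] N_def by (simp add: V_def Bphi'_def)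
    next
      case N1: False
      show ?thesis
      proof (cases "N = 3")
        case True
        then have "{1..(N - 1) div 2} = {1::nat}" by auto
        then show ?thesis using bk[of 1] bk[of 2] bk[of 3] True N_def pal[OF odd] odd
          by (simp add: V_def Bphi'_def Bphi_def)
      next
        case False
        have N5: "N \<ge> 5"
        proof -
          obtain m where m: "N = 2 * m + 1" using odd by (rule oddE)
          then show ?thesis using N1 False by auto
        qed
        have z: "(\<Prod>l\<in>{1..(N - 1) div 2}. Bphi \<phi> (Bprod la ra [b l, b (N + 1 - l)])) *
          Bphi' \<Phi> (b ((N + 1) div 2)) = 0"
        proof (cases s)
          case False
          have "fst (W!0) = 0" using tyk[of 0] N5 False by simp
          then have "Bphi \<phi> (Bprod la ra [b 1, b (N + 1 - 1)]) = 0"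
            using bk[of 1] N5 by (simp add: Bphi_def)
          moreover have "(1::nat) \<in> {1..(N - 1) div 2}" using N5 by auto
          ultimately have "(\<Prod>l\<in>{1..(N - 1) div 2}. Bphi \<phi> (Bprod la ra [b l, b (N + 1 - l)])) = 0"
            by (intro prod_zero finite_atLeastAtMost bexI[where x=1])
          then show ?thesis by simp
        next
          case True
          show ?thesis
          proof (cases "even ((N + 1) div 2 - 1)")
            case True
            moreover have "(N + 1) div 2 - 1 < N" using N5 by simp
            ultimately have "snd (W!((N + 1) div 2 - 1)) = 0" using tyk[of "(N + 1) div 2 - 1"] \<open>s\<close> by simp
            moreover have "1 \<le> (N + 1) div 2" "(N + 1) div 2 \<le> N" using N5 by auto
            then have "b ((N + 1) div 2) = W!((N + 1) div 2 - 1)" by (rule bk)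
            ultimately show ?thesis by (simp add: Bphi'_def)
          next
            case False
            have "fst (W!1) = 0" using tyk[of 1] N5 \<open>s\<close> by simp
            then have "Bphi \<phi> (Bprod la ra [b 2, b (N + 1 - 2)]) = 0"
              using bk[of 2] N5 by (simp add: Bphi_def)
            moreover have "(2::nat) \<in> {1..(N - 1) div 2}" using N5 by auto
            ultimately have "(\<Prod>l\<in>{1..(N - 1) div 2}. Bphi \<phi> (Bprod la ra [b l, b (N + 1 - l)])) = 0"
              by (intro prod_zero finite_atLeastAtMost bexI[where x=2])
            then show ?thesis by simp
          qed
        qed
        have V0: "V W = 0" using N5 N_def by (simp add: V_def)
        show ?thesis by (simp only: z V0 if_cancel)
      qed
    qed
  qed
  then show ?thesis unfolding N_def .
qed

definition Alet :: "'a \<times> 'f \<Rightarrow> bool" where "Alet x \<longleftrightarrow> (\<exists>a. x = (a, 0) \<and> a \<in> A1 \<and> \<phi> a = 0)"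
definition Flet :: "'a \<times> 'f \<Rightarrow> bool" where "Flet x \<longleftrightarrow> (\<exists>f. x = (0, f) \<and> f \<in> F1)"
definition altc :: "bool \<Rightarrow> ('a \<times> 'f) list \<Rightarrow> bool" where
  "altc s W \<longleftrightarrow> (\<forall>k<length W. if even k = s then Alet (W!k) else Flet (W!k))"

lemma altc_Nil[simp]: "altc s []" by (simp add: altc_def)

lemma altc_Cons: "altc s (x # W) \<longleftrightarrow> (if s then Alet x else Flet x) \<and> altc (\<not> s) W"
proof
  assume H: "altc s (x # W)"
  have "if even (0::nat) = s then Alet ((x # W)!0) else Flet ((x # W)!0)"
  proof -
    have "0 < length (x # W)" by simp
    then show ?thesis using H unfolding altc_def by blast
  qed
  moreover have "altc (\<not> s) W" unfolding altc_def
  proof (intro allI impI)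
    fix k assume "k < length W"
    then have "Suc k < length (x # W)" by simp
    then have "if even (Suc k) = s then Alet ((x # W)!Suc k) else Flet ((x # W)!Suc k)"
      using H unfolding altc_def by blast
    then show "if even k = (\<not> s) then Alet (W!k) else Flet (W!k)" by auto
  qed
  ultimately show "(if s then Alet x else Flet x) \<and> altc (\<not> s) W" by auto
next
  assume H: "(if s then Alet x else Flet x) \<and> altc (\<not> s) W"
  show "altc s (x # W)" unfolding altc_def
  proof (intro allI impI)
    fix k assume k: "k < length (x # W)"
    show "if even k = s then Alet ((x # W)!k) else Flet ((x # W)!k)"
    proof (cases k)
      case 0
      then show ?thesis using H by auto
    next
      case (Suc j)
      then have "j < length W" using k by simp
      then have "if even j = (\<not> s) then Alet (W!j) else Flet (W!j)" using H unfolding altc_def by blast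
      then show ?thesis using Suc by auto
    qed
  qed
qed

lemma altc_typed: "altc s W \<Longrightarrow> \<forall>k<length W. if even k = s then snd (W!k) = 0 else fst (W!k) = 0"
  unfolding altc_def Alet_def Flet_def by (metis fst_conv snd_conv)

lemma altc_hd_fst: "altc False W \<Longrightarrow> W \<noteq> [] \<Longrightarrow> fst (W!0) = 0"
  using altc_typed[of False W] by auto

lemma len_conc: "length (concat (map hh qs)) = 2 * length qs"
  by (induction qs) (auto simp: hh_def)

lemma altc_conc: "(\<forall>p\<in>set qs. fst p \<in> F1 \<and> snd p \<in> A1 \<and> \<phi> (snd p) = 0) \<Longrightarrow> altc False R \<Longrightarrow>
   altc False (concat (map hh qs) @ R)"
  by (induction qs) (auto simp: hh_def altc_Cons Alet_def Flet_def)

definition cycval :: "'a \<Rightarrow> ('f \<times> 'a) list \<Rightarrow> complex" where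
  "cycval a0 ps = \<phi> (a0 * snd (last ps)) * prod_list (map (\<lambda>p. \<phi> (snd p)) (butlast ps)) * \<Phi> (Fprod (map fst ps))"

definition CVc :: "bool \<Rightarrow> bool \<Rightarrow> 'a \<Rightarrow> ('f \<times> 'a) list \<Rightarrow> bool" where
  "CVc s t a0 ps \<longleftrightarrow> ps \<noteq> [] \<and> a0 \<in> A1 \<and> (\<forall>p\<in>set ps. fst p \<in> F1 \<and> snd p \<in> A1) \<and>
     (\<forall>p\<in>set (butlast ps). \<phi> (snd p) = 0) \<and> (if s then \<phi> a0 = 0 else a0 = 1) \<and>
     (if t then \<phi> (snd (last ps)) = 0 else snd (last ps) = 1)"

lemma conc_split: "ps \<noteq> [] \<Longrightarrow> concat (map hh ps) = body ps @ [(snd (last ps), 0)]"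
proof -
  assume ne: "ps \<noteq> []"
  have "concat (map hh ps) = concat (map hh (butlast ps @ [last ps]))" using ne by simp
  also have "\<dots> = concat (map hh (butlast ps)) @ hh (last ps)" by simp
  finally show ?thesis by (simp add: body_def hh_def)
qed

lemma CV_a: assumes "CVc s t a0 ps" shows "altc s (Wst s t a0 ps)"
proof -
  have ne: "ps \<noteq> []" using assms by (simp add: CVc_def)
  have qs: "\<forall>p\<in>set (butlast ps). fst p \<in> F1 \<and> snd p \<in> A1 \<and> \<phi> (snd p) = 0"
    using assms by (auto simp: CVc_def dest: in_set_butlastD)
  have lst: "fst (last ps) \<in> F1" "snd (last ps) \<in> A1" using assms ne by (auto simp: CVc_def)
  have R: "altc False ([(0, fst (last ps))] @ (if t then [(snd (last ps), 0)] else []))"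
    using lst assms by (auto simp: altc_Cons Alet_def Flet_def CVc_def)
  have "altc False (body ps @ (if t then [(snd (last ps), 0)] else []))"
    using altc_conc[OF qs R] by (simp add: body_def)
  then show ?thesis using assms
    by (cases s) (auto simp: Wst_def altc_Cons Alet_def CVc_def)
qed

lemma P_one: "P ((1, 0) # xs) = P xs" by (simp add: Bone_def[symmetric])
lemma P_single1: "P [(1, 0)] = Bone" by (simp add: Bone_def[symmetric])

lemma CV_b: assumes "CVc s t a0 ps" shows "P (mlist a0 ps) = P (Wst s t a0 ps)"
proof -
  have ne: "ps \<noteq> []" using assms by (simp add: CVc_def)
  have m: "mlist a0 ps = [(a0, 0)] @ body ps @ [(snd (last ps), 0)]"
    by (simp add: mlist_def conc_split[OF ne])
  have h: "P (if s then [(a0, 0)] else []) = P [(a0, 0)]" using assms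
    by (cases s) (auto simp del: P_Cons simp add: CVc_def P_single1)
  have l: "P (if t then [(snd (last ps), 0)] else []) = P [(snd (last ps), 0)]" using assms
    by (cases t) (auto simp del: P_Cons simp add: CVc_def P_single1)
  show ?thesis unfolding m Wst_def P_app h l ..
qed

lemma CV_c: assumes "CVc s t a0 ps" shows "cycval a0 ps = V (Wst s t a0 ps)"
proof -
  have ne: "ps \<noteq> []" using assms by (simp add: CVc_def)
  show ?thesis
  proof (cases "length ps = 1")
    case True
    then obtain f an where ps: "ps = [(f, an)]" by (metis One_nat_def length_0_conv length_Suc_conv surj_pair)
    show ?thesis using assms unfolding ps
      by (cases s; cases t) (auto simp: CVc_def Wst_def body_def V_def cycval_def)
  next
    case False
    moreover have "length ps \<noteq> 0" using ne by simp
    ultimately have len2: "length ps \<ge> 2" by linarith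
    obtain p rest where ps: "ps = p # rest" using ne by (cases ps) auto
    then have "rest \<noteq> []" using len2 by auto
    then have "hd ps \<in> set (butlast ps)" using ps by simp
    then have "\<phi> (snd (hd ps)) = 0" using assms by (simp add: CVc_def)
    then have "prod_list (map (\<lambda>p. \<phi> (snd p)) (butlast ps)) = 0"
      using \<open>hd ps \<in> set (butlast ps)\<close> by (simp add: prod_list_zero_iff)
    then have c0: "cycval a0 ps = 0" by (simp add: cycval_def)
    have lenW: "length (Wst s t a0 ps) = (if s then 1 else 0) + 2 * (length ps - 1) + 1 + (if t then 1 else 0)"
      using ne len2 by (simp add: Wst_def body_def len_conc)
    have "V (Wst s t a0 ps) = 0"
    proof (cases "length (Wst s t a0 ps) = 3")
      case True
      then have "\<not> s" using lenW len2 by (auto split: if_splits)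
      then have "fst (Wst s t a0 ps ! 0) = 0"
        using altc_hd_fst CV_a[OF assms] True by fastforce
      then show ?thesis using True by (simp add: V_def)
    next
      case False
      then show ?thesis using lenW len2 by (auto simp: V_def split: if_splits)
    qed
    then show ?thesis using c0 by simp
  qed
qed

lemma map_shift_nth: "map (\<lambda>p. W!(p-1)) [1..<length W + 1] = W"
  by (rule nth_equalityI) (simp_all del: upt_Suc add: nth_upt)

definition Bsets :: "bool \<Rightarrow> ('a \<times> 'f) set" where
  "Bsets = (\<lambda>i. if i then {(a, 0) | a. a \<in> A1} else {(sA c 1, f) | c f. f \<in> F1})"

lemma E1:
  assumes IF: "inf_free (Bprod la ra) (Bphi \<phi>) (Bphi' \<Phi>) (UNIV :: bool set) Bsets"
    and cv: "CVc s t a0 ps"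
  shows "\<Phi> (snd (P (mlist a0 ps))) = cycval a0 ps"
proof -
  define W where "W = Wst s t a0 ps"
  have alt: "altc s W" using CV_a[OF cv] W_def by simp
  have ne: "W \<noteq> []" using cv unfolding W_def Wst_def body_def by auto
  define idx where "idx = (\<lambda>p::nat. even (p - 1) = s)"
  define b where "b = (\<lambda>p. W!(p-1))"
  define n where "n = length W"
  have H: "\<forall>n::nat. \<forall>(idx::nat \<Rightarrow> bool) (b::nat \<Rightarrow> 'a \<times> 'f).
        n \<ge> 1 \<longrightarrow> (\<forall>l\<in>{1..n}. idx l \<in> (UNIV :: bool set)) \<longrightarrow>
        (\<forall>l\<in>{1..<n}. idx l \<noteq> idx (l + 1)) \<longrightarrow>
        (\<forall>l\<in>{1..n}. b l \<in> Bsets (idx l) \<and> Bphi \<phi> (b l) = 0) \<longrightarrow>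
          Bphi \<phi> (P (map b [1..<n+1])) = 0 \<and>
          Bphi' \<Phi> (P (map b [1..<n+1])) =
            (if odd n \<and> (\<forall>l\<in>{1..(n-1) div 2}. idx l = idx (n + 1 - l))
             then (\<Prod>l\<in>{1..(n-1) div 2}. Bphi \<phi> (P [b l, b (n + 1 - l)])) * Bphi' \<Phi> (b ((n+1) div 2))
             else 0)"
    using IF unfolding inf_free_def by assumption
  have c1: "n \<ge> 1" using ne n_def by (cases W) auto
  have c2: "\<forall>l\<in>{1..<n}. idx l \<noteq> idx (l + 1)"
  proof
    fix l :: nat assume "l \<in> {1..<n}"
    then obtain j where "l = Suc j" by (cases l) auto
    then show "idx l \<noteq> idx (l + 1)" by (simp add: idx_def)
  qed
  have c3: "\<forall>l\<in>{1..n}. b l \<in> Bsets (idx l) \<and> Bphi \<phi> (b l) = 0"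
  proof
    fix l assume l: "l \<in> {1..n}"
    then have k: "l - 1 < length W" using n_def by auto
    have e: "even (l - 1) = s \<longleftrightarrow> idx l" by (simp add: idx_def)
    have ak: "if even (l - 1) = s then Alet (W!(l-1)) else Flet (W!(l-1))"
      using alt k unfolding altc_def by blast
    show "b l \<in> Bsets (idx l) \<and> Bphi \<phi> (b l) = 0"
    proof (cases "idx l")
      case True
      then have "Alet (W!(l-1))" using ak e by simp
      then show ?thesis using True by (auto simp: Alet_def b_def Bsets_def Bphi_def)
    next
      case False
      then have "Flet (W!(l-1))" using ak e by simp
      then obtain f where "W!(l-1) = (0, f)" "f \<in> F1" by (auto simp: Flet_def)
      then have bl: "b l = (sA 0 1, f)" by (simp add: b_def)
      have "b l \<in> {(sA c 1, f) | c f. f \<in> F1}" using bl \<open>f \<in> F1\<close> by blast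
      moreover have "Bphi \<phi> (b l) = 0" using bl by (simp add: Bphi_def)
      ultimately show ?thesis using False by (simp add: Bsets_def)
    qed
  qed
  have mb: "map b [1..<n+1] = W" unfolding b_def n_def by (rule map_shift_nth)
  have "Bphi' \<Phi> (P W) = (if odd n \<and> (\<forall>l\<in>{1..(n-1) div 2}. idx l = idx (n + 1 - l))
             then (\<Prod>l\<in>{1..(n-1) div 2}. Bphi \<phi> (P [b l, b (n + 1 - l)])) * Bphi' \<Phi> (b ((n+1) div 2))
             else 0)"
  proof -
    have "Bphi \<phi> (P (map b [1..<n+1])) = 0 \<and> Bphi' \<Phi> (P (map b [1..<n+1])) =
            (if odd n \<and> (\<forall>l\<in>{1..(n-1) div 2}. idx l = idx (n + 1 - l))
             then (\<Prod>l\<in>{1..(n-1) div 2}. Bphi \<phi> (P [b l, b (n + 1 - l)])) * Bphi' \<Phi> (b ((n+1) div 2))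
             else 0)"
      by (rule H[rule_format]) (use c1 c2 c3 in auto)
    then show ?thesis unfolding mb by (rule conjunct2)
  qed
  also have "\<dots> = V W" unfolding n_def
    by (rule rhs[OF altc_typed[OF alt] ne]) (auto simp: idx_def b_def)
  finally have "\<Phi> (snd (P W)) = V W" by (simp add: Bphi'_def)
  then show ?thesis using CV_b[OF cv] CV_c[OF cv] W_def by simp
qed

end

context B'setting begin

lemma LinA: "snd (P (xs @ (sA k 1 + c, 0) # ys)) = sF k (snd (P (xs @ ys))) + snd (P (xs @ (c, 0) # ys))"
  by (simp add: P_app lin_mid)

lemma LinPhi: "\<Phi> (snd (P (xs @ (a, 0) # ys))) = \<phi> a * \<Phi> (snd (P (xs @ ys))) + \<Phi> (snd (P (xs @ (cen a, 0) # ys)))"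
proof -
  have e: "sA (\<phi> a) 1 + cen a = a" by (simp add: cen_def)
  show ?thesis using LinA[of xs "\<phi> a" "cen a" ys] unfolding e by (simp add: linPhi)
qed

lemma phi_end1: "\<phi> (a0 * a) = \<phi> a * \<phi> (a0 * 1) + \<phi> (a0 * cen a)"
proof -
  have "a0 * a = a0 * (sA (\<phi> a) 1 + cen a)" by (simp add: cen_def)
  also have "\<dots> = sA (\<phi> a) (a0 * 1) + a0 * cen a" by (simp only: distrib_left sA_m1(2)[symmetric])
  finally show ?thesis by (simp add: linphi)
qed

lemma phi_end0: "\<phi> (a0 * a) = \<phi> a0 * \<phi> (1 * a) + \<phi> (cen a0 * a)"
proof -
  have "a0 * a = (sA (\<phi> a0) 1 + cen a0) * a" by (simp add: cen_def)
  also have "\<dots> = sA (\<phi> a0) (1 * a) + cen a0 * a" by (simp only: distrib_right sA_m1(1)[symmetric])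
  finally show ?thesis by (simp add: linphi)
qed

abbreviation Q where "Q a0 ps \<equiv> \<Phi> (snd (P (mlist a0 ps)))"

abbreviation IFh where "IFh \<equiv> inf_free (Bprod la ra) (Bphi \<phi>) (Bphi' \<Phi>) (UNIV :: bool set) Bsets"

definition good :: "'a \<Rightarrow> ('f \<times> 'a) list \<Rightarrow> bool" where
  "good a0 ps \<longleftrightarrow> ps \<noteq> [] \<and> a0 \<in> A1 \<and> (\<forall>p\<in>set ps. fst p \<in> F1 \<and> snd p \<in> A1)"

lemma E2:
  assumes IF: IFh and g: "good a0 ps" and ic: "\<forall>p\<in>set (butlast ps). \<phi> (snd p) = 0"
    and a0: "a0 = 1 \<or> \<phi> a0 = 0"
  shows "Q a0 ps = cycval a0 ps"
proof -
  have ne: "ps \<noteq> []" using g by (simp add: good_def)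
  obtain f an where la: "last ps = (f, an)" by (cases "last ps")
  define qs where "qs = butlast ps"
  have ps: "ps = qs @ [(f, an)]" using append_butlast_last_id[OF ne] la qs_def by simp
  have "(f, an) \<in> set ps" using last_in_set[OF ne] la by simp
  then have f: "f \<in> F1" "an \<in> A1" using g unfolding good_def by force+
  define pre where "pre = (a0, 0) # concat (map hh qs) @ [(0, f)]"
  have m: "\<And>x. mlist a0 (qs @ [(f, x)]) = pre @ (x, 0) # []"
    by (simp add: mlist_def pre_def hh_def)
  have s: "s = (a0 \<noteq> 1) \<Longrightarrow> (if s then \<phi> a0 = 0 else a0 = 1)" for s using a0 by auto
  have cv1: "CVc (a0 \<noteq> 1) False a0 (qs @ [(f, 1)])"
    using g ic s[of "a0 \<noteq> 1"] f oneA1 unfolding CVc_def good_def ps by auto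
  have cv2: "CVc (a0 \<noteq> 1) True a0 (qs @ [(f, cen an)])"
    using g ic s[of "a0 \<noteq> 1"] f cen_A1[of an] cen_phi[of an] unfolding CVc_def good_def ps by auto
  have "Q a0 ps = \<phi> an * \<Phi> (snd (P (pre @ []))) + \<Phi> (snd (P (pre @ [(cen an, 0)])))"
    unfolding ps m by (rule LinPhi)
  also have "P (pre @ []) = P (mlist a0 (qs @ [(f, 1)]))" unfolding m P_app P_single1 by simp
  also have "pre @ [(cen an, 0)] = mlist a0 (qs @ [(f, cen an)])" unfolding m by simp
  finally have "Q a0 ps = \<phi> an * cycval a0 (qs @ [(f, 1)]) + cycval a0 (qs @ [(f, cen an)])"
    using E1[OF IF cv1] E1[OF IF cv2] by simp
  also have "\<dots> = cycval a0 ps"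
    unfolding cycval_def ps using phi_end1[of a0 an] by (simp add: algebra_simps)
  finally show ?thesis .
qed

lemma E3:
  assumes IF: IFh and g: "good a0 ps" and ic: "\<forall>p\<in>set (butlast ps). \<phi> (snd p) = 0"
  shows "Q a0 ps = cycval a0 ps"
proof -
  have g1: "good 1 ps" and g2: "good (cen a0) ps" using g oneA1 cen_A1 by (auto simp: good_def)
  have "Q a0 ps = \<phi> a0 * \<Phi> (snd (P ([] @ concat (map hh ps)))) + \<Phi> (snd (P ([] @ (cen a0, 0) # concat (map hh ps))))"
    unfolding mlist_def using LinPhi[of "[]" a0] by simp
  also have "P ([] @ concat (map hh ps)) = P (mlist 1 ps)" unfolding mlist_def P_one by simp
  also have "[] @ (cen a0, 0) # concat (map hh ps) = mlist (cen a0) ps" by (simp add: mlist_def)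
  finally have "Q a0 ps = \<phi> a0 * cycval 1 ps + cycval (cen a0) ps"
    using E2[OF IF g1 ic] E2[OF IF g2 ic] cen_phi by simp
  also have "\<dots> = cycval a0 ps"
    unfolding cycval_def using phi_end0[of a0 "snd (last ps)"] by (simp add: algebra_simps)
  finally show ?thesis .
qed

definition nbad :: "('f \<times> 'a) list \<Rightarrow> nat" where
  "nbad ps = length (filter (\<lambda>p. \<phi> (snd p) \<noteq> 0) (butlast ps))"

lemma bl_same: "snd x = snd y \<Longrightarrow> map (\<lambda>p. \<phi> (snd p)) (butlast (x # ys)) = map (\<lambda>p. \<phi> (snd p)) (butlast (y # ys))"
  by (cases ys) auto
lemma last_same: "snd x = snd y \<Longrightarrow> snd (last (x # ys)) = snd (last (y # ys))"
  by (cases ys) auto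
lemma nbad_same: "snd x = snd y \<Longrightarrow> length (filter (\<lambda>p. \<phi> (snd p) \<noteq> 0) (butlast (x # ys))) =
   length (filter (\<lambda>p. \<phi> (snd p) \<noteq> 0) (butlast (y # ys)))"
  by (cases ys) auto

lemma merge_P: "P (U @ (0, f) # (0, g) # VV) = P (U @ (0, f * g) # VV)"
proof -
  have "(0, f) \<cdot> ((0, g) \<cdot> Z) = (0, f * g) \<cdot> Z" for Z
  proof -
    have "(0, f) \<cdot> ((0, g) \<cdot> Z) = ((0, f) \<cdot> (0, g)) \<cdot> Z" by (simp add: Bassoc)
    also have "(0::'a, f) \<cdot> (0, g) = (0, f * g)" by (simp add: Bmult_def)
    finally show ?thesis .
  qed
  then show ?thesis by (simp add: P_app)
qed

lemma main_list:
  assumes IF: IFh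
  shows "good a0 ps \<Longrightarrow> Q a0 ps = cycval a0 ps"
proof (induction "length ps + nbad ps" arbitrary: a0 ps rule: less_induct)
  case less
  show ?case
  proof (cases "nbad ps = 0")
    case True
    then have "\<forall>p\<in>set (butlast ps). \<phi> (snd p) = 0"
      unfolding nbad_def by (simp add: filter_empty_conv)
    then show ?thesis using E3[OF IF less.prems] by simp
  next
    case False
    then obtain p where p: "p \<in> set (butlast ps)" "\<phi> (snd p) \<noteq> 0"
      unfolding nbad_def by (metis (mono_tags, lifting) filter_empty_conv length_0_conv)
    obtain xs zs where bl: "butlast ps = xs @ p # zs" using split_list[OF p(1)] by blast
    obtain f a where pfa: "p = (f, a)" by (cases p)
    have ne: "ps \<noteq> []" using less.prems by (simp add: good_def)
    obtain g a' ys where rest: "zs @ [last ps] = (g, a') # ys"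
      by (metis append_is_Nil_conv list.exhaust not_Cons_self2 surj_pair)
    have ps: "ps = xs @ (f, a) # (g, a') # ys"
      using append_butlast_last_id[OF ne] bl pfa rest by (metis append.assoc append_Cons)
    have gd: "a0 \<in> A1" "\<forall>q\<in>set ps. fst q \<in> F1 \<and> snd q \<in> A1" using less.prems by (auto simp: good_def)
    have fa: "f \<in> F1" "a \<in> A1" "g \<in> F1" "a' \<in> A1" using gd(2) unfolding ps by auto
    define ps1 where "ps1 = xs @ (f * g, a') # ys"
    define ps2 where "ps2 = xs @ (f, cen a) # (g, a') # ys"
    have good1: "good a0 ps1" using gd fa F1_mult unfolding ps1_def good_def ps by auto
    have good2: "good a0 ps2" using gd fa cen_A1 unfolding ps2_def good_def ps by auto
    have bps: "butlast ps = xs @ (f, a) # butlast ((g, a') # ys)" unfolding ps by (simp add: butlast_append)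
    have bps1: "butlast ps1 = xs @ butlast ((f * g, a') # ys)" unfolding ps1_def by (simp add: butlast_append)
    have bps2: "butlast ps2 = xs @ (f, cen a) # butlast ((g, a') # ys)" unfolding ps2_def by (simp add: butlast_append)
    have nb1: "nbad ps1 < nbad ps + 1" unfolding nbad_def bps bps1 using nbad_same[of "(f * g, a')" "(g, a')" ys] p(2) pfa by simp
    have nb2: "nbad ps2 < nbad ps" unfolding nbad_def bps bps2 using p(2) pfa cen_phi[of a] by simp
    have l1: "length ps1 + 1 = length ps" unfolding ps1_def ps by simp
    have l2: "length ps2 = length ps" unfolding ps2_def ps by simp
    have IH1: "Q a0 ps1 = cycval a0 ps1" using less.hyps[OF _ good1] nb1 l1 by simp
    have IH2: "Q a0 ps2 = cycval a0 ps2" using less.hyps[OF _ good2] nb2 l2 by simp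
    define U where "U = (a0, 0) # concat (map hh xs)"
    have m: "mlist a0 ps = (U @ [(0, f)]) @ (a, 0) # (0, g) # (a', 0) # concat (map hh ys)"
      unfolding ps U_def mlist_def by (simp add: hh_def)
    have m1: "mlist a0 ps1 = U @ (0, f * g) # (a', 0) # concat (map hh ys)"
      unfolding ps1_def U_def mlist_def by (simp add: hh_def)
    have m2: "mlist a0 ps2 = (U @ [(0, f)]) @ (cen a, 0) # (0, g) # (a', 0) # concat (map hh ys)"
      unfolding ps2_def U_def mlist_def by (simp add: hh_def)
    have "Q a0 ps = \<phi> a * \<Phi> (snd (P ((U @ [(0, f)]) @ (0, g) # (a', 0) # concat (map hh ys)))) + Q a0 ps2"
      unfolding m m2 by (rule LinPhi)
    also have "P ((U @ [(0, f)]) @ (0, g) # (a', 0) # concat (map hh ys)) = P (mlist a0 ps1)"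
      unfolding m1 using merge_P by simp
    finally have Qe: "Q a0 ps = \<phi> a * cycval a0 ps1 + cycval a0 ps2" using IH1 IH2 by simp
    have c2: "cycval a0 ps2 = 0"
      unfolding cycval_def bps2 using cen_phi[of a] by simp
    have lst: "snd (last ps) = snd (last ps1)" unfolding ps ps1_def
      using last_same[of "(g, a')" "(f * g, a')" ys] by simp
    have pr: "prod_list (map (\<lambda>p. \<phi> (snd p)) (butlast ps)) =
       \<phi> a * prod_list (map (\<lambda>p. \<phi> (snd p)) (butlast ps1))"
      unfolding bps bps1 using bl_same[of "(g, a')" "(f * g, a')" ys] by simp
    have fp: "Fprod (map fst ps) = Fprod (map fst ps1)"
      unfolding ps ps1_def using Fprod_merge[of "map fst xs" f g "map fst ys"] by simp
    have "cycval a0 ps = \<phi> a * cycval a0 ps1"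
      unfolding cycval_def lst pr fp by simp
    then show ?thesis using Qe c2 by simp
  qed
qed

lemma hh_simp[simp]: "hh (f, a) = [(0, f), (a, 0)]" by (simp add: hh_def)

lemma Fstart: "altc False W \<Longrightarrow> W \<noteq> [] \<Longrightarrow> \<exists>qs f t an. W = concat (map hh qs) @ [(0, f)] @ (if t then [(an, 0)] else []) \<and>
   (\<forall>p\<in>set qs. fst p \<in> F1 \<and> snd p \<in> A1 \<and> \<phi> (snd p) = 0) \<and> f \<in> F1 \<and> (t \<longrightarrow> an \<in> A1 \<and> \<phi> an = 0)"
proof (induction W rule: induct_list012)
  case 1
  then show ?case by simp
next
  case (2 x)
  then obtain f where "x = (0, f)" "f \<in> F1" by (auto simp: altc_Cons Flet_def)
  then show ?case by (intro exI[of _ "[]"] exI[of _ f] exI[of _ False]) auto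
next
  case (3 x y zs)
  from 3(3) have x: "Flet x" and y: "Alet y" and zs: "altc False zs" by (simp_all add: altc_Cons)
  obtain f where f: "x = (0, f)" "f \<in> F1" using x by (auto simp: Flet_def)
  obtain a where a: "y = (a, 0)" "a \<in> A1" "\<phi> a = 0" using y by (auto simp: Alet_def)
  show ?case
  proof (cases "zs = []")
    case True
    then show ?thesis using f a
      by (intro exI[of _ "[]"] exI[of _ f] exI[of _ True] exI[of _ a]) auto
  next
    case False
    from 3(1)[OF zs False] obtain qs f' t an where
      H: "zs = concat (map hh qs) @ [(0, f')] @ (if t then [(an, 0)] else [])"
         "\<forall>p\<in>set qs. fst p \<in> F1 \<and> snd p \<in> A1 \<and> \<phi> (snd p) = 0" "f' \<in> F1" "t \<longrightarrow> an \<in> A1 \<and> \<phi> an = 0"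
      by blast
    show ?thesis using f a H
      by (intro exI[of _ "(f, a) # qs"] exI[of _ f'] exI[of _ t] exI[of _ an]) auto
  qed
qed

lemma conv:
  assumes alt: "altc s W" and ne: "W \<noteq> []" and n1: "\<not> (s \<and> length W = 1)"
  shows "\<exists>t a0 ps. CVc s t a0 ps \<and> W = Wst s t a0 ps"
proof -
  obtain a0 W' where W: "W = (if s then [(a0, 0)] else []) @ W'"
    and a0: "if s then a0 \<in> A1 \<and> \<phi> a0 = 0 else a0 = 1" and W': "altc False W'" "W' \<noteq> []"
  proof (cases s)
    case True
    obtain x W' where xW: "W = x # W'" using ne by (cases W) auto
    then have "Alet x" "altc False W'" using alt True by (simp_all add: altc_Cons)
    moreover have "W' \<noteq> []" using n1 True xW by auto
    moreover obtain a where "x = (a, 0)" "a \<in> A1" "\<phi> a = 0" using \<open>Alet x\<close> by (auto simp: Alet_def)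
    ultimately show ?thesis using that[of a W'] xW True by auto
  next
    case False
    then show ?thesis using that[of 1 W] alt ne by auto
  qed
  obtain qs f t an where F: "W' = concat (map hh qs) @ [(0, f)] @ (if t then [(an, 0)] else [])"
    "\<forall>p\<in>set qs. fst p \<in> F1 \<and> snd p \<in> A1 \<and> \<phi> (snd p) = 0" "f \<in> F1" "t \<longrightarrow> an \<in> A1 \<and> \<phi> an = 0"
    using Fstart[OF W'] by blast
  define ps where "ps = qs @ [(f, if t then an else 1)]"
  have bl: "butlast ps = qs" and lst: "last ps = (f, if t then an else 1)" unfolding ps_def by simp_all
  have "CVc s t a0 ps"
    unfolding CVc_def bl lst using F a0 oneA1 by (auto simp: ps_def split: if_splits)
  moreover have "W = Wst s t a0 ps"
    unfolding Wst_def body_def bl lst W F by simp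
  ultimately show ?thesis by blast
qed

lemma fstP: "fst (P xs) = prod_list (map fst xs)"
  by (induction xs) (auto simp: Bone_def)

lemma prod_list_0: "(0::'a) \<in> set xs \<Longrightarrow> prod_list xs = 0"
  by (induction xs) auto

lemma dir1:
  assumes cyc: "\<forall>a0 ps. good a0 ps \<longrightarrow> Q a0 ps = cycval a0 ps"
  shows IFh
  unfolding inf_free_def
proof (intro allI impI)
  fix n :: nat and idx :: "nat \<Rightarrow> bool" and b :: "nat \<Rightarrow> 'a \<times> 'f"
  assume n1: "n \<ge> 1" and "\<forall>l\<in>{1..n}. idx l \<in> (UNIV :: bool set)"
    and alt: "\<forall>l\<in>{1..<n}. idx l \<noteq> idx (l + 1)"
    and mem: "\<forall>l\<in>{1..n}. b l \<in> Bsets (idx l) \<and> Bphi \<phi> (b l) = 0"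
  define s where "s = idx 1"
  define W where "W = map b [1..<n+1]"
  have lenW: "length W = n" unfolding W_def by simp
  have ne: "W \<noteq> []" using n1 lenW by auto
  have idxp: "1 \<le> p \<longrightarrow> p \<le> n \<longrightarrow> idx p = (even (p - 1) = s)" for p
  proof (induction p)
    case 0
    then show ?case by simp
  next
    case (Suc p)
    show ?case
    proof (cases "p = 0")
      case True
      then show ?thesis by (simp add: s_def)
    next
      case False
      show ?thesis
      proof (intro impI)
        assume "Suc p \<le> n"
        then have "p \<in> {1..<n}" using False by auto
        then have "idx p \<noteq> idx (Suc p)" using alt by auto
        moreover have "idx p = (even (p - 1) = s)" using Suc.IH False \<open>Suc p \<le> n\<close> by auto
        moreover have "even (Suc p - 1) = (\<not> even (p - 1))" using False by (cases p) auto
        ultimately show "idx (Suc p) = (even (Suc p - 1) = s)" by auto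
      qed
    qed
  qed
  have Wk: "W!k = b (Suc k)" if "k < n" for k using that unfolding W_def by (simp del: upt_Suc add: nth_upt)
  have alc: "altc s W" unfolding altc_def lenW
  proof (intro allI impI)
    fix k assume k: "k < n"
    have i: "idx (Suc k) = (even k = s)" using idxp[of "Suc k"] k by simp
    have m: "b (Suc k) \<in> Bsets (idx (Suc k))" "Bphi \<phi> (b (Suc k)) = 0" using mem k by auto
    show "if even k = s then Alet (W!k) else Flet (W!k)"
    proof (cases "even k = s")
      case True
      then obtain a where "b (Suc k) = (a, 0)" "a \<in> A1" using m i by (auto simp: Bsets_def)
      then show ?thesis using True m Wk[OF k] by (simp add: Alet_def Bphi_def)
    next
      case False
      then obtain c f where cf: "b (Suc k) = (sA c 1, f)" "f \<in> F1" using m i by (auto simp: Bsets_def)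
      then have "c = 0" using m by (simp add: Bphi_def phi_sc)
      then show ?thesis using False cf Wk[OF k] by (simp add: Flet_def)
    qed
  qed
  have ty: "\<forall>k<length W. if even k = s then snd (W!k) = 0 else fst (W!k) = 0"
    using altc_typed[OF alc] .
  have mb: "map b [1..<n+1] = W" unfolding W_def ..
  have rh: "(if odd (length W) \<and> (\<forall>l\<in>{1..(length W - 1) div 2}. idx l = idx (length W + 1 - l))
     then (\<Prod>l\<in>{1..(length W - 1) div 2}. Bphi \<phi> (Bprod la ra [b l, b (length W + 1 - l)])) *
        Bphi' \<Phi> (b ((length W + 1) div 2)) else 0) = V W"
    by (rule rhs[OF ty ne]) (use idxp lenW Wk in auto)
  show "Bphi \<phi> (P (map b [1..<n+1])) = 0 \<and>
          Bphi' \<Phi> (P (map b [1..<n+1])) =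
            (if odd n \<and> (\<forall>l\<in>{1..(n-1) div 2}. idx l = idx (n + 1 - l))
             then (\<Prod>l\<in>{1..(n-1) div 2}. Bphi \<phi> (P [b l, b (n + 1 - l)])) * Bphi' \<Phi> (b ((n+1) div 2))
             else 0)"
    unfolding mb rh[unfolded lenW]
  proof (cases "s \<and> n = 1")
    case True
    then obtain a where "W = [(a, 0)]" "\<phi> a = 0"
      using alc lenW by (cases W) (auto simp: altc_Cons Alet_def)
    then show "Bphi \<phi> (P W) = 0 \<and> Bphi' \<Phi> (P W) = V W"
      by (simp add: Bphi_def Bphi'_def V_def Bmult_def Bone_def)
  next
    case False
    have "\<exists>k<length W. fst (W!k) = 0"
    proof (cases s)
      case True
      then have "1 < length W" using False n1 lenW by auto
      then show ?thesis using ty True by force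
    next
      case False
      then show ?thesis using ty ne by force
    qed
    then have "0 \<in> set (map fst W)" by (metis in_set_conv_nth length_map nth_map)
    then have p1: "Bphi \<phi> (P W) = 0" by (simp add: Bphi_def fstP prod_list_0)
    obtain t a0 ps where cv: "CVc s t a0 ps" and Wd: "W = Wst s t a0 ps"
      using conv[OF alc ne] False lenW by blast
    have "good a0 ps" using cv by (simp add: CVc_def good_def)
    then have "Q a0 ps = cycval a0 ps" using cyc by blast
    then have "Bphi' \<Phi> (P W) = V W"
      using CV_b[OF cv] CV_c[OF cv] Wd by (simp add: Bphi'_def)
    then show "Bphi \<phi> (P W) = 0 \<and> Bphi' \<Phi> (P W) = V W" using p1 by simp
  qed
qed

lemma conv_idx:
  assumes n1: "n \<ge> 1"
  shows "mixed_word la ra n a f = snd (P (mlist (a 0) (map (\<lambda>l. (f l, a l)) [1..<n+1])))"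
    and "\<phi> (a 0 * a n) * (\<Prod>i\<in>{1..n-1}. \<phi> (a i)) * \<Phi> (Fprod (map f [1..<n+1])) =
         cycval (a 0) (map (\<lambda>l. (f l, a l)) [1..<n+1])"
proof -
  show "mixed_word la ra n a f = snd (P (mlist (a 0) (map (\<lambda>l. (f l, a l)) [1..<n+1])))"
    unfolding mixed_word_def mlist_def hh_def by (simp add: o_def)
  have u: "[1..<n+1] = [1..<n] @ [n]" using n1 by simp
  have s: "{1..n-1} = set [1..<n]" using n1 by auto
  have pr: "(\<Prod>i\<in>{1..n-1}. \<phi> (a i)) = prod_list (map (\<lambda>i. \<phi> (a i)) [1..<n])"
    unfolding s by (rule prod.distinct_set_conv_list) simp
  show "\<phi> (a 0 * a n) * (\<Prod>i\<in>{1..n-1}. \<phi> (a i)) * \<Phi> (Fprod (map f [1..<n+1])) =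
         cycval (a 0) (map (\<lambda>l. (f l, a l)) [1..<n+1])"
    unfolding cycval_def pr
    by (simp only: u map_append butlast_snoc last_snoc) (simp add: o_def)
qed

lemma ps_repr:
  assumes "ps \<noteq> []"
  shows "map (\<lambda>l. ((\<lambda>i. fst (ps!(i-1))) l, (\<lambda>i. if i = 0 then a0 else snd (ps!(i-1))) l)) [1..<length ps + 1] = ps"
  by (rule nth_equalityI) (simp_all del: upt_Suc add: nth_upt)

lemma main: "cyclic_antimonotone_indep \<phi> la ra \<Phi> A1 F1 \<longleftrightarrow> IFh"
proof
  assume cyc: "cyclic_antimonotone_indep \<phi> la ra \<Phi> A1 F1"
  show IFh
  proof (rule dir1, intro allI impI)
    fix a0 ps assume g: "good a0 ps"
    define n where "n = length ps"
    define a where "a = (\<lambda>i. if i = 0 then a0 else snd (ps!(i-1)))"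
    define f where "f = (\<lambda>i. fst (ps!(i-1)))"
    have ne: "ps \<noteq> []" using g by (simp add: good_def)
    have n1: "n \<ge> 1" using ne n_def by (cases ps) auto
    have rep: "map (\<lambda>l. (f l, a l)) [1..<n+1] = ps" unfolding f_def a_def n_def by (rule ps_repr[OF ne])
    have a0: "a 0 = a0" by (simp add: a_def)
    have ha: "\<forall>l\<le>n. a l \<in> A1"
    proof (intro allI impI)
      fix l assume "l \<le> n"
      then show "a l \<in> A1" using g unfolding a_def good_def n_def
        by (cases l) (auto simp: nth_mem)
    qed
    have hf: "\<forall>l\<in>{1..n}. f l \<in> F1"
    proof
      fix l assume "l \<in> {1..n}"
      then have "l - 1 < length ps" using n_def by auto
      then show "f l \<in> F1" using g unfolding f_def good_def by (auto simp: nth_mem)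
    qed
    have e1: "mixed_word la ra n a f = snd (P (mlist a0 ps))" using conv_idx(1)[OF n1, of a f] rep a0 by simp
    have e2: "\<phi> (a 0 * a n) * (\<Prod>i\<in>{1..n-1}. \<phi> (a i)) * \<Phi> (Fprod (map f [1..<n+1])) = cycval a0 ps"
      using conv_idx(2)[OF n1, of a f] rep a0 by simp
    have "Q a0 ps = \<Phi> (mixed_word la ra n a f)" by (simp add: e1)
    also have "\<dots> = \<phi> (a 0 * a n) * (\<Prod>i\<in>{1..n-1}. \<phi> (a i)) * \<Phi> (Fprod (map f [1..<n+1]))"
      using cyc n1 ha hf unfolding cyclic_antimonotone_indep_def by blast
    also have "\<dots> = cycval a0 ps" by (rule e2)
    finally show "Q a0 ps = cycval a0 ps" .
  qed
next
  assume IF: IFh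
  show "cyclic_antimonotone_indep \<phi> la ra \<Phi> A1 F1"
    unfolding cyclic_antimonotone_indep_def
  proof (intro allI impI)
    fix n :: nat and a f
    assume n1: "n \<ge> 1" and ha: "\<forall>l\<le>n. a l \<in> A1" and hf: "\<forall>l\<in>{1..n}. f l \<in> F1"
    have "good (a 0) (map (\<lambda>l. (f l, a l)) [1..<n+1])"
      unfolding good_def using n1 ha hf by auto
    then show "\<Phi> (mixed_word la ra n a f) = \<phi> (a 0 * a n) * (\<Prod>i\<in>{1..n-1}. \<phi> (a i)) * \<Phi> (Fprod (map f [1..<n+1]))"
      unfolding conv_idx[OF n1] using main_list[OF IF] by simp
  qed
qed

end

theorem proposition3p1:
  fixes sA :: "complex \<Rightarrow> 'a::ring_1 \<Rightarrow> 'a"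
    and \<phi> :: "'a \<Rightarrow> complex"
    and sF :: "complex \<Rightarrow> 'f::ring \<Rightarrow> 'f"
    and la :: "'a \<Rightarrow> 'f \<Rightarrow> 'f"
    and ra :: "'f \<Rightarrow> 'a \<Rightarrow> 'f"
    and \<Phi> :: "'f \<Rightarrow> complex"
    and A1 :: "'a set" and F1 :: "'f set"
  assumes "ncps_typeB' sA \<phi> sF la ra \<Phi>"
    and "subalg sA A1" and "1 \<in> A1"
    and "subalg sF F1"
  shows "cyclic_antimonotone_indep \<phi> la ra \<Phi> A1 F1 \<longleftrightarrow>
    inf_free (Bprod la ra) (Bphi \<phi>) (Bphi' \<Phi>) (UNIV :: bool set)
      (\<lambda>i. if i then {(a, 0) | a. a \<in> A1} else {(sA c 1, f) | c f. f \<in> F1})"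
proof -
  interpret B'setting sA \<phi> sF la ra \<Phi> A1 F1 using assms by unfold_locales
  show ?thesis using main unfolding Bsets_def .
qed

end
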